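(* Let $\mu$ be a positive Borel measure on $\mathbb{R}$, absolutely continuous with respect to Lebesgue measure, with finite moments of all orders, supported on a set $E\subseteq\mathbb{R}$ with infinitely many points, and let $c\in\mathbb{R}\setminus E$ and $N>0$. With the notation of the context, for every $n\ge1$, $$Q_n^{c,N}(x)=P_n(x)+\Lambda_n^c\,P_{n-1}(x),\qquad \Lambda_n^c=\Lambda_n^c(N)=\frac{\pi_{n-1}-r_{n-1}}{1+NB_n^c}-\pi_{n-1},$$ where $\pi_{n-1}=\frac{P_n(c)}{P_{n-1}(c)}$, $r_{n-1}=\frac{F_n(c)}{F_{n-1}(c)}$ and $B_n^c=\frac{-Q_n^c(c)P_{n-1}(c)}{\|P_{n-1}\|_\mu^2}$. In particular $\Lambda_n^c$ does not depend on $x$.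
   Context: $\{P_n\}_{n\ge0}$ is the monic orthogonal polynomial sequence (MOPS) for $\mu$, $\|f\|_\mu^2=\int_E f^2\,d\mu$. $F_n(s)=\int_E \frac{P_n(x)}{x-s}\,d\mu(x)$ for $s\in\mathbb{C}\setminus E$ (functions of the second kind), with the convention $F_{-1}(c)=1$. $\{Q_n^c\}_{n\ge0}$ is the MOPS with respect to $\langle f,g\rangle_\nu=\int_E f(x)g(x)\frac{1}{x-c}d\mu(x)$. $\{Q_n^{c,N}\}_{n\ge0}$ is the MOPS with respect to $\langle f,g\rangle_{\nu_N}=\int_E f(x)g(x)\frac{1}{x-c}d\mu(x)+Nf(c)g(c)$, i.e. for the Geronimus perturbed measure $\frac{1}{x-c}d\mu(x)+N\delta(x-c)$. *)

theory Defs
  imports "HOL-Analysis.Analysis" "HOL-Computational_Algebra.Polynomial"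
begin

definition msupport :: "real measure \<Rightarrow> real set" where
  "msupport \<mu> = {x. \<forall>e>0. emeasure \<mu> {x - e <..< x + e} > 0}"

(* a monic orthogonal polynomial sequence for a (possibly non-positive) bilinear form *)
definition is_MOPS :: "(real poly \<Rightarrow> real poly \<Rightarrow> real) \<Rightarrow> (nat \<Rightarrow> real poly) \<Rightarrow> bool" where
  "is_MOPS ip P \<longleftrightarrow> (\<forall>n. degree (P n) = n \<and> lead_coeff (P n) = 1 \<and>
      ip (P n) (P n) \<noteq> 0 \<and> (\<forall>m<n. ip (P n) (P m) = 0))"

definition ip_mu :: "real measure \<Rightarrow> real poly \<Rightarrow> real poly \<Rightarrow> real" where
  "ip_mu \<mu> f g = (\<integral>x. poly f x * poly g x \<partial>\<mu>)"

definition ip_nu :: "real measure \<Rightarrow> real \<Rightarrow> real poly \<Rightarrow> real poly \<Rightarrow> real" where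
  "ip_nu \<mu> c f g = (\<integral>x. poly f x * poly g x / (x - c) \<partial>\<mu>)"

definition ip_nuN :: "real measure \<Rightarrow> real \<Rightarrow> real \<Rightarrow> real poly \<Rightarrow> real poly \<Rightarrow> real" where
  "ip_nuN \<mu> c N f g = ip_nu \<mu> c f g + N * poly f c * poly g c"

definition second_kind :: "real measure \<Rightarrow> (nat \<Rightarrow> real poly) \<Rightarrow> nat \<Rightarrow> real \<Rightarrow> real" where
  "second_kind \<mu> P n s = (\<integral>x. poly (P n) x / (x - s) \<partial>\<mu>)"

end

theory Submission
  imports Defs
begin

definition bil :: "(real poly \<Rightarrow> real poly \<Rightarrow> real) \<Rightarrow> bool" where
  "bil ip \<longleftrightarrow> (\<forall>f g h. ip f (g + h) = ip f g + ip f h) \<and> (\<forall>f g a. ip f (smult a g) = a * ip f g)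
     \<and> (\<forall>f g. ip f g = ip g f)"

lemma bil_add: "bil ip \<Longrightarrow> ip f (g + h) = ip f g + ip f h" unfolding bil_def by blast
lemma bil_smult: "bil ip \<Longrightarrow> ip f (smult a g) = a * ip f g" unfolding bil_def by blast
lemma bil_sym: "bil ip \<Longrightarrow> ip f g = ip g f" unfolding bil_def by blast
lemma bil_zero: "bil ip \<Longrightarrow> ip f 0 = 0"
  using bil_smult[of ip f 0 f] by simp
lemma bil_diff: "bil ip \<Longrightarrow> ip f (g - h) = ip f g - ip f h"
  using bil_add[of ip f "g - h" h] by simp
lemma bil_const: "bil ip \<Longrightarrow> ip f [:a:] = a * ip f 1"
  using bil_smult[of ip f a 1] by (simp add: one_pCons)
lemma bil_sum: "bil ip \<Longrightarrow> ip f (\<Sum>k\<in>A. smult (a k) (g k)) = (\<Sum>k\<in>A. a k * ip f (g k))"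
proof (induction A rule: infinite_finite_induct)
  case (infinite A) then show ?case by (simp add: bil_zero)
next
  case empty then show ?case by (simp add: bil_zero)
next
  case (insert x F) then show ?case by (simp add: bil_add bil_smult)
qed

lemma mops_expand:
  fixes P :: "nat \<Rightarrow> real poly"
  assumes P: "\<And>n. degree (P n) = n \<and> lead_coeff (P n) = 1"
  shows "(\<forall>i\<ge>m. coeff q i = 0) \<Longrightarrow> \<exists>a. q = (\<Sum>k<m. smult (a k) (P k))"
proof (induction m arbitrary: q)
  case 0
  then have "q = 0" by (metis le0 poly_eqI coeff_0)
  then show ?case by simp
next
  case (Suc m)
  define r where "r = q - smult (coeff q m) (P m)"
  have "\<forall>i\<ge>m. coeff r i = 0"
  proof (intro allI impI)
    fix i assume "m \<le> i"
    show "coeff r i = 0"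
    proof (cases "i = m")
      case True then show ?thesis using P[of m] by (metis r_def coeff_diff coeff_smult mult.right_neutral diff_self)
    next
      case False
      then have "i > m" using \<open>m \<le> i\<close> by simp
      then have "coeff (P m) i = 0" using P[of m] by (simp add: coeff_eq_0)
      moreover have "coeff q i = 0" using Suc.prems \<open>i > m\<close> by simp
      ultimately show ?thesis by (simp add: r_def)
    qed
  qed
  then obtain b where b: "r = (\<Sum>k<m. smult (b k) (P k))" using Suc.IH by blast
  have "q = r + smult (coeff q m) (P m)" by (simp add: r_def)
  also have "\<dots> = (\<Sum>k<Suc m. smult ((b(m := coeff q m)) k) (P k))"
    by (simp add: b)
  finally show ?case by blast
qed

lemma orth_low:
  assumes "bil ip" "is_MOPS ip R" "\<forall>i\<ge>n. coeff q i = 0"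
  shows "ip (R n) q = 0"
proof -
  from assms(2) have P: "\<And>n. degree (R n) = n \<and> lead_coeff (R n) = 1" unfolding is_MOPS_def by blast
  obtain a where a: "q = (\<Sum>k<n. smult (a k) (R k))" using mops_expand[OF P assms(3)] by blast
  have "ip (R n) q = (\<Sum>k<n. a k * ip (R n) (R k))" unfolding a by (rule bil_sum[OF assms(1)])
  also have "\<dots> = 0" using assms(2) unfolding is_MOPS_def by simp
  finally show ?thesis .
qed

lemma orth_uniq:
  assumes "bil ip" "is_MOPS ip R" "\<forall>i\<ge>m. coeff q i = 0" "\<forall>k<m. ip q (R k) = 0"
  shows "q = 0"
proof -
  from assms(2) have P: "\<And>n. degree (R n) = n \<and> lead_coeff (R n) = 1" unfolding is_MOPS_def by blast
  obtain a where a: "q = (\<Sum>k<m. smult (a k) (R k))" using mops_expand[OF P assms(3)] by blast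
  have "a j = 0" if j: "j < m" for j
  proof -
    have "0 = ip (R j) q" using assms(4) j bil_sym[OF assms(1)] by metis
    also have "\<dots> = (\<Sum>k<m. a k * ip (R j) (R k))" unfolding a by (rule bil_sum[OF assms(1)])
    also have "\<dots> = (\<Sum>k<m. if k = j then a j * ip (R j) (R j) else 0)"
    proof (rule sum.cong)
      fix k assume "k \<in> {..<m}"
      show "a k * ip (R j) (R k) = (if k = j then a j * ip (R j) (R j) else 0)"
      proof (cases "k < j")
        case True then show ?thesis using assms(2) unfolding is_MOPS_def by auto
      next
        case False
        show ?thesis
        proof (cases "k = j")
          case False
          with \<open>\<not> k < j\<close> have "j < k" by simp
          then have "ip (R k) (R j) = 0" using assms(2) unfolding is_MOPS_def by auto
          then show ?thesis using False bil_sym[OF assms(1)] by (metis mult_zero_right)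
        qed simp
      qed
    qed simp
    also have "\<dots> = a j * ip (R j) (R j)" using j by simp
    finally show ?thesis using assms(2) unfolding is_MOPS_def by simp
  qed
  then show ?thesis unfolding a by simp
qed

lemma meas_poly[measurable]: "poly (p::real poly) \<in> borel_measurable borel"
proof -
  have "continuous_on UNIV (\<lambda>x. poly p x)" using continuous_on_poly[OF continuous_on_id, of UNIV p] by simp
  then show ?thesis by (rule borel_measurable_continuous_onI)
qed

context
  fixes \<mu> :: "real measure" and c e :: real
  assumes borel: "sets \<mu> = sets borel"
    and moments: "\<And>k::nat. integrable \<mu> (\<lambda>x. x ^ k)"
    and e: "e > 0" and null: "emeasure \<mu> {c - e <..< c + e} = 0"
begin

lemma int_poly: "integrable \<mu> (\<lambda>x. poly p x)"
proof -
  have "integrable \<mu> (\<lambda>x. \<Sum>i\<le>degree p. coeff p i * x ^ i)"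
    by (rule Bochner_Integration.integrable_sum, rule integrable_mult_right, rule moments)
  then show ?thesis by (simp add: poly_altdef)
qed

lemma meas_div: "(\<lambda>x. poly p x / (x - c)) \<in> borel_measurable \<mu>"
  unfolding measurable_cong_sets[OF borel refl] by measurable

lemma AE_far: "AE x in \<mu>. \<bar>x - c\<bar> \<ge> e"
proof -
  have "{c - e <..< c + e} \<in> null_sets \<mu>" using null borel by (simp add: null_sets_def)
  from AE_not_in[OF this] show ?thesis
    by eventually_elim (auto simp: abs_if)
qed

lemma int_div: "integrable \<mu> (\<lambda>x. poly p x / (x - c))"
proof (rule Bochner_Integration.integrable_bound[OF _ meas_div])
  show "integrable \<mu> (\<lambda>x. poly p x / e)"
    using int_poly by (intro integrable_divide) 
  show "AE x in \<mu>. norm (poly p x / (x - c)) \<le> norm (poly p x / e)"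
    using AE_far
  proof eventually_elim
    case (elim x)
    then show ?case using e
      by (simp add: abs_divide divide_left_mono mult_nonneg_nonneg)
  qed
qed

lemma int_mu2: "integrable \<mu> (\<lambda>x. poly f x * poly g x)"
  using int_poly[of "f * g"] by simp

lemma int_nu2: "integrable \<mu> (\<lambda>x. poly f x * poly g x / (x - c))"
  using int_div[of "f * g"] by simp

lemma bil_mu: "bil (ip_mu \<mu>)"
  unfolding bil_def ip_mu_def
  by (auto simp: distrib_left int_mu2 mult.commute mult.left_commute)

lemma bil_nuN: "bil (ip_nuN \<mu> c N0)"
proof -
  have 1: "ip_nuN \<mu> c N0 f (smult a g) = a * ip_nuN \<mu> c N0 f g" for f g a
  proof -
    have "(\<integral>x. poly f x * poly (smult a g) x / (x - c) \<partial>\<mu>) = (\<integral>x. a * (poly f x * poly g x / (x - c)) \<partial>\<mu>)"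
      by (rule arg_cong[where f = "\<lambda>h. integral\<^sup>L \<mu> h"]) (simp add: algebra_simps)
    also have "\<dots> = a * (\<integral>x. poly f x * poly g x / (x - c) \<partial>\<mu>)"
      by (rule integral_mult_right_zero)
    finally show ?thesis unfolding ip_nuN_def ip_nu_def by (simp add: algebra_simps)
  qed
  show ?thesis
  unfolding bil_def
  proof (intro conjI allI)
    show "ip_nuN \<mu> c N0 f (smult a g) = a * ip_nuN \<mu> c N0 f g" for f g a by (rule 1)
  qed (auto simp: ip_nuN_def ip_nu_def distrib_left add_divide_distrib int_nu2 mult.commute mult.left_commute)
qed

lemma key: "ip_nuN \<mu> c N0 f ([:-c, 1:] * s) = ip_mu \<mu> f s"
proof -
  have "(\<integral>x. poly f x * poly ([:-c, 1:] * s) x / (x - c) \<partial>\<mu>) = (\<integral>x. poly f x * poly s x \<partial>\<mu>)"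
  proof (rule integral_cong_AE)
    show "AE x in \<mu>. poly f x * poly ([:-c, 1:] * s) x / (x - c) = poly f x * poly s x"
      using AE_far
    proof eventually_elim
      case (elim x)
      then have "x - c \<noteq> 0" using e by auto
      then show ?case by (simp add: field_simps)
    qed
  qed (unfold measurable_cong_sets[OF borel refl], measurable)+
  then show ?thesis unfolding ip_nuN_def ip_nu_def ip_mu_def by simp
qed


lemma split_lin:
  fixes q :: "real poly"
  assumes "\<forall>i\<ge>Suc m. coeff q i = 0"
  shows "q = [:-c, 1:] * synthetic_div q c + [:poly q c:] \<and> (\<forall>i\<ge>m. coeff (synthetic_div q c) i = 0)"
proof
  show "q = [:-c, 1:] * synthetic_div q c + [:poly q c:]" by (rule synthetic_div_correct'[symmetric])
  show "\<forall>i\<ge>m. coeff (synthetic_div q c) i = 0"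
  proof (intro allI impI)
    fix i assume i: "m \<le> i"
    show "coeff (synthetic_div q c) i = 0"
    proof (cases "synthetic_div q c = 0")
      case False
      then have d: "degree q \<noteq> 0" by (simp add: synthetic_div_eq_0_iff)
      have "degree q \<le> m" using assms by (intro degree_le) auto
      then have "degree (synthetic_div q c) < i" using d i by (simp add: degree_synthetic_div)
      then show ?thesis by (rule coeff_eq_0)
    qed simp
  qed
qed

lemma vanish_of_degree: "degree (q::real poly) < k \<Longrightarrow> \<forall>i\<ge>k. coeff q i = 0"
  by (auto intro: coeff_eq_0)

lemma geronimus:
  assumes PM: "is_MOPS (ip_mu \<mu>) P" and RM: "is_MOPS (ip_nuN \<mu> c N0) R" and n: "n = Suc m"
  shows "ip_nu \<mu> c (P m) 1 + N0 * poly (P m) c \<noteq> 0"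
    and "R n = P n + smult (- (ip_nu \<mu> c (P n) 1 + N0 * poly (P n) c)
                 / (ip_nu \<mu> c (P m) 1 + N0 * poly (P m) c)) (P m)"
proof -
  let ?ipN = "ip_nuN \<mu> c N0"
  let ?ipM = "ip_mu \<mu>"
  have bN: "bil ?ipN" by (rule bil_nuN)
  have bM: "bil ?ipM" by (rule bil_mu)
  have Fx: "?ipN f 1 = ip_nu \<mu> c f 1 + N0 * poly f c" for f unfolding ip_nuN_def by simp
  have Pd: "degree (P k) = k" "lead_coeff (P k) = 1" "?ipM (P k) (P k) \<noteq> 0"
     "\<And>j. j < k \<Longrightarrow> ?ipM (P k) (P j) = 0" for k
    using PM unfolding is_MOPS_def by blast+
  have Rd: "degree (R k) = k" "lead_coeff (R k) = 1" "?ipN (R k) (R k) \<noteq> 0" for k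
    using RM unfolding is_MOPS_def by blast+
  have lowdiff: "\<forall>i\<ge>k. coeff (R k - P k) i = 0" for k
  proof (intro allI impI)
    fix i assume "k \<le> i"
    show "coeff (R k - P k) i = 0"
    proof (cases "i = k")
      case True then show ?thesis using Rd(2)[of k] Pd(2)[of k] Rd(1)[of k] Pd(1)[of k] by simp
    next
      case False then have "k < i" using \<open>k \<le> i\<close> by simp
      then show ?thesis using Rd(1)[of k] Pd(1)[of k] by (simp add: coeff_eq_0)
    qed
  qed
  define a' where "a' = coeff (R n - P n) m"
  define D where "D = R n - P n - smult a' (P m)"
  have Dv: "\<forall>i\<ge>m. coeff D i = 0"
  proof (intro allI impI)
    fix i assume "m \<le> i"
    show "coeff D i = 0"
    proof (cases "i = m")
      case True then show ?thesis using Pd(2)[of m] Pd(1)[of m] by (simp add: D_def a'_def)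
    next
      case False then have "n \<le> i" using \<open>m \<le> i\<close> n by simp
      then show ?thesis using lowdiff[of n] Pd(1)[of m] n by (simp add: D_def coeff_eq_0)
    qed
  qed
  have Dorth: "\<forall>k<m. ?ipM D (P k) = 0"
  proof (intro allI impI)
    fix k assume k: "k < m"
    have "degree ([:-c, 1:] * P k) \<le> 1 + k"
      using degree_mult_le[of "[:-c, 1:]" "P k"] Pd(1)[of k] by simp
    then have "\<forall>i\<ge>n. coeff ([:-c, 1:] * P k) i = 0" using k n by (intro vanish_of_degree) simp
    then have "?ipN (R n) ([:-c, 1:] * P k) = 0" by (rule orth_low[OF bN RM])
    then have r: "?ipM (R n) (P k) = 0" by (metis key)
    have "?ipM D (P k) = ?ipM (P k) D" by (rule bil_sym[OF bM])
    also have "\<dots> = ?ipM (P k) (R n) - ?ipM (P k) (P n) - a' * ?ipM (P k) (P m)"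
      unfolding D_def by (simp add: bil_diff[OF bM] bil_smult[OF bM])
    also have "\<dots> = 0" using r Pd(4)[of k n] Pd(4)[of k m] k n bil_sym[OF bM] by (metis diff_self less_SucI mult_zero_right)
    finally show "?ipM D (P k) = 0" .
  qed
  have "D = 0" by (rule orth_uniq[OF bM PM Dv Dorth])
  then have Rn: "R n = P n + smult a' (P m)" unfolding D_def by (simp add: algebra_simps)
  have "?ipN (R n) 1 = 0" using n by (intro orth_low[OF bN RM]) auto
  then have "?ipN 1 (R n) = 0" using bil_sym[OF bN] by metis
  then have "?ipN 1 (P n) + a' * ?ipN 1 (P m) = 0" unfolding Rn by (simp add: bil_add[OF bN] bil_smult[OF bN])
  then have eq: "?ipN (P n) 1 + a' * ?ipN (P m) 1 = 0" using bil_sym[OF bN] by metis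
  show nz: "ip_nu \<mu> c (P m) 1 + N0 * poly (P m) c \<noteq> 0"
  proof
    assume z: "ip_nu \<mu> c (P m) 1 + N0 * poly (P m) c = 0"
    have orthP: "?ipN (P m) q = 0" if q: "\<forall>i\<ge>Suc m. coeff q i = 0" for q
    proof -
      from split_lin[OF q] have sp: "q = [:-c, 1:] * synthetic_div q c + [:poly q c:]"
        and tv: "\<forall>i\<ge>m. coeff (synthetic_div q c) i = 0" by auto
      have "?ipN (P m) q = ?ipN (P m) ([:-c, 1:] * synthetic_div q c + [:poly q c:])"
        using sp by (rule arg_cong)
      also have "\<dots> = ?ipN (P m) ([:-c, 1:] * synthetic_div q c) + ?ipN (P m) [:poly q c:]"
        by (rule bil_add[OF bN])
      also have "\<dots> = ?ipM (P m) (synthetic_div q c) + poly q c * ?ipN (P m) 1"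
        by (simp only: key bil_const[OF bN])
      finally have "?ipN (P m) q = ?ipM (P m) (synthetic_div q c) + poly q c * ?ipN (P m) 1" .
      also have "\<dots> = 0" using orth_low[OF bM PM tv] z Fx[of "P m"] by simp
      finally show ?thesis .
    qed
    have "?ipN (R m) (R m) = ?ipN (R m) (P m) + ?ipN (R m) (R m - P m)"
      using bil_add[OF bN, of "R m" "P m" "R m - P m"] by simp
    also have "?ipN (R m) (R m - P m) = 0" by (rule orth_low[OF bN RM lowdiff])
    also have "?ipN (R m) (P m) = ?ipN (P m) (R m)" by (rule bil_sym[OF bN])
    also have "\<dots> = 0" using Rd(1)[of m] by (intro orthP vanish_of_degree) simp
    finally show False using Rd(3)[of m] by simp
  qed
  from eq nz have "a' = - (ip_nu \<mu> c (P n) 1 + N0 * poly (P n) c) / (ip_nu \<mu> c (P m) 1 + N0 * poly (P m) c)"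
    unfolding Fx by (simp add: field_simps)
  then show "R n = P n + smult (- (ip_nu \<mu> c (P n) 1 + N0 * poly (P n) c)
                 / (ip_nu \<mu> c (P m) 1 + N0 * poly (P m) c)) (P m)" using Rn by simp
qed
end

theorem proposition1:
  fixes \<mu> :: "real measure" and c N :: real
    and P Q QN :: "nat \<Rightarrow> real poly" and n :: nat
  assumes borel: "sets \<mu> = sets borel"
    and ac: "absolutely_continuous lborel \<mu>"
    and moments: "\<And>k::nat. integrable \<mu> (\<lambda>x. x ^ k)"
    and inf_supp: "infinite (msupport \<mu>)"
    and c_out: "c \<notin> msupport \<mu>"
    and N_pos: "N > 0"
    and P_MOPS: "is_MOPS (ip_mu \<mu>) P"
    and Q_MOPS: "is_MOPS (ip_nu \<mu> c) Q"
    and QN_MOPS: "is_MOPS (ip_nuN \<mu> c N) QN"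
    and n_ge: "n \<ge> 1"
    and Pc: "poly (P (n - 1)) c \<noteq> 0"
  shows "QN n = P n + smult
           ((poly (P n) c / poly (P (n - 1)) c
               - second_kind \<mu> P n c / second_kind \<mu> P (n - 1) c)
             / (1 + N * (- poly (Q n) c * poly (P (n - 1)) c / ip_mu \<mu> (P (n - 1)) (P (n - 1))))
            - poly (P n) c / poly (P (n - 1)) c)
           (P (n - 1))"
proof -
  from c_out obtain e where e_pos: "e > 0" and null: "emeasure \<mu> {c - e <..< c + e} = 0"
    unfolding msupport_def by (auto simp: not_less)
  note ctx = borel moments e_pos null
  define m where "m = n - 1"
  have nm: "n = Suc m" using n_ge by (simp add: m_def)
  have nm1: "n - 1 = m" by (simp add: m_def)
  have ip0: "ip_nuN \<mu> c 0 = ip_nu \<mu> c" by (intro ext) (simp add: ip_nuN_def)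
  have QM: "is_MOPS (ip_nuN \<mu> c 0) Q" using Q_MOPS ip0 by simp
  have bM: "bil (ip_mu \<mu>)" by (rule bil_mu[OF ctx])
  have b0: "bil (ip_nuN \<mu> c 0)" by (rule bil_nuN[OF ctx])
  have sk: "second_kind \<mu> P k c = ip_nu \<mu> c (P k) 1" for k
    unfolding second_kind_def ip_nu_def by simp
  define F' where "F' = ip_nu \<mu> c (P m) 1"
  define Fn where "Fn = ip_nu \<mu> c (P n) 1"
  define h where "h = ip_mu \<mu> (P m) (P m)"
  define p where "p = poly (P m) c"
  define pn where "pn = poly (P n) c"
  define qc where "qc = poly (Q n) c"
  have Pd: "degree (P k) = k" "lead_coeff (P k) = 1" "ip_mu \<mu> (P k) (P k) \<noteq> 0" for k
    using P_MOPS unfolding is_MOPS_def by blast+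
  have Qd: "degree (Q k) = k" "lead_coeff (Q k) = 1" for k
    using Q_MOPS unfolding is_MOPS_def by blast+
  have hnz: "h \<noteq> 0" using Pd(3) by (simp add: h_def)
  have pnz: "p \<noteq> 0" using Pc unfolding p_def nm1 .
  have GN1: "F' + N * p \<noteq> 0" using geronimus(1)[OF ctx P_MOPS QN_MOPS nm] by (simp add: F'_def p_def)
  have GN2: "QN n = P n + smult (- (Fn + N * pn) / (F' + N * p)) (P m)"
    using geronimus(2)[OF ctx P_MOPS QN_MOPS nm] by (simp add: F'_def p_def Fn_def pn_def)
  have F'nz: "F' \<noteq> 0" using geronimus(1)[OF ctx P_MOPS QM nm] by (simp add: F'_def)
  define L where "L = [:-c, 1:] * P m"
  define T where "T = Q n - L"
  have Ld: "degree L = n" "coeff L n = 1"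
  proof -
    have "P m \<noteq> 0" using Pd(2)[of m] by auto
    then have "degree ([:-c, 1:] * P m) = degree [:-c, 1:] + degree (P m)" by (intro degree_mult_eq) simp_all
    then show "degree L = n" unfolding L_def using Pd(1)[of m] nm by (simp only:) simp
    then show "coeff L n = 1" using lead_coeff_mult[of "[:-c, 1:]" "P m"] Pd(2)[of m] unfolding L_def by simp
  qed
  have Tv: "\<forall>i\<ge>Suc m. coeff T i = 0"
  proof (intro allI impI)
    fix i assume "Suc m \<le> i"
    show "coeff T i = 0"
    proof (cases "i = n")
      case True then show ?thesis using Ld Qd[of n] by (simp add: T_def)
    next
      case False then have "n < i" using \<open>Suc m \<le> i\<close> nm by simp
      then show ?thesis using Ld Qd[of n] by (simp add: T_def coeff_eq_0)
    qed
  qed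
  from split_lin[OF ctx Tv] have sp: "T = [:-c, 1:] * synthetic_div T c + [:poly T c:]"
    and tv: "\<forall>i\<ge>m. coeff (synthetic_div T c) i = 0" by auto
  let ?ip = "ip_nuN \<mu> c 0"
  have "?ip (Q n) (P m) = 0" using Pd(1)[of m] nm by (intro orth_low[OF b0 QM] vanish_of_degree[OF ctx]) simp
  then have "0 = ?ip (P m) (Q n)" using bil_sym[OF b0] by metis
  also have "Q n = L + T" by (simp add: T_def)
  also have "?ip (P m) (L + T) = ?ip (P m) L + ?ip (P m) T" by (rule bil_add[OF b0])
  also have "?ip (P m) L = h" unfolding L_def h_def by (rule key[OF ctx])
  also have "?ip (P m) T = ?ip (P m) ([:-c, 1:] * synthetic_div T c + [:poly T c:])"
    using sp by (rule arg_cong)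
  also have "\<dots> = ?ip (P m) ([:-c, 1:] * synthetic_div T c) + ?ip (P m) [:poly T c:]"
    by (rule bil_add[OF b0])
  also have "\<dots> = ip_mu \<mu> (P m) (synthetic_div T c) + poly T c * ?ip (P m) 1"
    by (simp only: key[OF ctx] bil_const[OF b0])
  also have "ip_mu \<mu> (P m) (synthetic_div T c) = 0" by (rule orth_low[OF bM P_MOPS tv])
  also have "poly T c = qc" unfolding T_def L_def qc_def by simp
  also have "?ip (P m) 1 = F'" unfolding F'_def ip_nuN_def by simp
  finally have qcF: "qc * F' = - h" by simp
  have qc_eq: "qc = - h / F'" using qcF F'nz by (simp add: field_simps)
  show ?thesis
    unfolding sk nm1 GN2
    unfolding Fn_def[symmetric] F'_def[symmetric] h_def[symmetric] p_def[symmetric] pn_def[symmetric] qc_def[symmetric]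
  proof -
    have "- (Fn + N * pn) / (F' + N * p) = (pn / p - Fn / F') / (1 + N * (- qc * p / h)) - pn / p"
    proof -
      have e1: "1 + N * (- qc * p / h) = (F' + N * p) / F'"
        using hnz F'nz unfolding qc_eq by (simp add: field_simps)
      have e2: "(pn / p - Fn / F') / ((F' + N * p) / F') = (pn * F' - Fn * p) / (p * (F' + N * p))"
      proof -
        have "(pn / p - Fn / F') = (pn * F' - Fn * p) / (p * F')" using F'nz pnz by (simp add: field_simps)
        then show ?thesis using GN1 F'nz pnz by simp
      qed
      have e3: "(pn * F' - Fn * p) / (p * (F' + N * p)) - pn / p = - (Fn + N * pn) / (F' + N * p)"
      proof -
        define d where "d = F' + N * p"
        have dnz: "d \<noteq> 0" using GN1 by (simp add: d_def)
        have "pn / p = pn * d / (p * d)" using dnz by simp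
        then have "(pn * F' - Fn * p) / (p * d) - pn / p = (pn * F' - Fn * p - pn * d) / (p * d)"
          by (simp add: diff_divide_distrib)
        also have "pn * F' - Fn * p - pn * d = p * (- (Fn + N * pn))" by (simp add: d_def algebra_simps)
        also have "p * (- (Fn + N * pn)) / (p * d) = - (Fn + N * pn) / d" using pnz by simp
        finally show ?thesis by (simp add: d_def)
      qed
      show ?thesis unfolding e1 e2 e3 ..
    qed
    then show "P n + smult (- (Fn + N * pn) / (F' + N * p)) (P m) =
      P n + smult ((pn / p - Fn / F') / (1 + N * (- qc * p / h)) - pn / p) (P m)" by simp
  qed
qed

end
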